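(* Let $X$ be a set. For every $\mathcal F\subseteq[0,1]^X$, \[\gamma_S(\alpha_S(\mathcal F))=\{\mathrm{op}\circ\langle\mathcal F\rangle\mid\mathrm{op}\colon[0,1]^{\mathcal F}\to[0,1]\text{ non-expansive w.r.t. the directed sup-metric}\},\] and $\alpha_S(\gamma_S(d))=d$ for every directed pseudo-metric $d$ on $X$.
   Context: $r\ominus s=\max\{0,r-s\}$, $r\oplus s=\min\{r+s,1\}$. A directed pseudo-metric on $X$ is $d\colon X\times X\to[0,1]$ with $d(x,x)=0$ and $d(x,z)\le d(x,y)\oplus d(y,z)$. $\alpha_S(\mathcal F)(x_1,x_2)=\bigvee_{f\in\mathcal F}(f(x_1)\ominus f(x_2))$; $\gamma_S(d)=\{f\in[0,1]^X\mid\forall x_1,x_2\colon f(x_1)\ominus f(x_2)\le d(x_1,x_2)\}$. $\langle\mathcal F\rangle\colon X\to[0,1]^{\mathcal F}$, $\langle\mathcal F\rangle(x)(f)=f(x)$. The directed sup-metric on $[0,1]^{\mathcal F}$ is $(u,v)\mapsto\sup_{f\in\mathcal F}(u(f)\ominus v(f))$, and $\mathrm{op}$ is non-expansive w.r.t. it if $\mathrm{op}(u)\ominus\mathrm{op}(v)\le\sup_{f}(u(f)\ominus v(f))$ for all $u,v$. *)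

theory Defs
  imports Main "HOL.Real"
begin

definition ominus :: "real \<Rightarrow> real \<Rightarrow> real" where
  "ominus r s = max 0 (r - s)"

definition oplus :: "real \<Rightarrow> real \<Rightarrow> real" where
  "oplus r s = min (r + s) 1"

text \<open>Supremum taken in the complete lattice [0,1]: the empty supremum is 0.\<close>
definition usup :: "real set \<Rightarrow> real" where
  "usup A = (if A = {} then 0 else Sup A)"

definition unit_fun :: "('a \<Rightarrow> real) \<Rightarrow> bool" where
  "unit_fun f \<longleftrightarrow> (\<forall>x. 0 \<le> f x \<and> f x \<le> 1)"

definition dir_pmetric :: "('a \<Rightarrow> 'a \<Rightarrow> real) \<Rightarrow> bool" where
  "dir_pmetric d \<longleftrightarrow> (\<forall>x y. 0 \<le> d x y \<and> d x y \<le> 1) \<and> (\<forall>x. d x x = 0)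
     \<and> (\<forall>x y z. d x z \<le> oplus (d x y) (d y z))"

definition alphaS :: "('a \<Rightarrow> real) set \<Rightarrow> 'a \<Rightarrow> 'a \<Rightarrow> real" where
  "alphaS F x1 x2 = usup ((\<lambda>f. ominus (f x1) (f x2)) ` F)"

definition gammaS :: "('a \<Rightarrow> 'a \<Rightarrow> real) \<Rightarrow> ('a \<Rightarrow> real) set" where
  "gammaS d = {f. unit_fun f \<and> (\<forall>x1 x2. ominus (f x1) (f x2) \<le> d x1 x2)}"

text \<open>The tupling map X -> [0,1]^F; only its values on F are relevant.\<close>
definition tuple :: "('a \<Rightarrow> real) set \<Rightarrow> 'a \<Rightarrow> ('a \<Rightarrow> real) \<Rightarrow> real" where
  "tuple F x = (\<lambda>f. f x)"

text \<open>[0,1]^F, represented by functions whose values on F lie in [0,1].\<close>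
definition cube :: "('a \<Rightarrow> real) set \<Rightarrow> (('a \<Rightarrow> real) \<Rightarrow> real) set" where
  "cube F = {u. \<forall>f\<in>F. 0 \<le> u f \<and> u f \<le> 1}"

definition dir_sup_metric :: "('a \<Rightarrow> real) set \<Rightarrow> (('a \<Rightarrow> real) \<Rightarrow> real) \<Rightarrow> (('a \<Rightarrow> real) \<Rightarrow> real) \<Rightarrow> real" where
  "dir_sup_metric F u v = usup ((\<lambda>f. ominus (u f) (v f)) ` F)"

definition nonexp_op :: "('a \<Rightarrow> real) set \<Rightarrow> ((('a \<Rightarrow> real) \<Rightarrow> real) \<Rightarrow> real) \<Rightarrow> bool" where
  "nonexp_op F op \<longleftrightarrow> (\<forall>u\<in>cube F. 0 \<le> op u \<and> op u \<le> 1) \<and>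
     (\<forall>u\<in>cube F. \<forall>v\<in>cube F. ominus (op u) (op v) \<le> dir_sup_metric F u v)"

end

theory Submission
  imports Defs
begin

lemma usup_le: "(\<And>a. a \<in> A \<Longrightarrow> a \<le> c) \<Longrightarrow> 0 \<le> c \<Longrightarrow> usup A \<le> c"
  unfolding usup_def by (auto intro: cSup_least)

lemma usup_ge: "(\<And>a. a \<in> A \<Longrightarrow> a \<le> c) \<Longrightarrow> a \<in> A \<Longrightarrow> a \<le> usup A"
proof -
  assume h: "\<And>a. a \<in> A \<Longrightarrow> a \<le> c" and a: "a \<in> A"
  have "bdd_above A" using h by (intro bdd_aboveI) 
  then have "a \<le> Sup A" using a by (simp add: cSup_upper)
  then show ?thesis using a by (auto simp: usup_def)
qed

lemma usup_nonneg: "(\<And>a. a \<in> A \<Longrightarrow> 0 \<le> a) \<Longrightarrow> (\<And>a. a \<in> A \<Longrightarrow> a \<le> c) \<Longrightarrow> 0 \<le> usup A"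
proof (cases "A = {}")
  case True then show ?thesis by (simp add: usup_def)
next
  case False
  assume h: "\<And>a. a \<in> A \<Longrightarrow> 0 \<le> a" "\<And>a. a \<in> A \<Longrightarrow> a \<le> c"
  from False obtain a where a: "a \<in> A" by blast
  have "a \<le> usup A" by (rule usup_ge[OF h(2) a])
  with h(1)[OF a] show ?thesis by simp
qed

lemma om_ge0: "0 \<le> ominus a b" by (simp add: ominus_def)
lemma om_ge: "a - b \<le> ominus a b" by (simp add: ominus_def)

locale cubeF =
  fixes F :: "('a \<Rightarrow> real) set"
begin

abbreviation "D \<equiv> dir_sup_metric F"

lemma om_le1: "u \<in> cube F \<Longrightarrow> v \<in> cube F \<Longrightarrow> f \<in> F \<Longrightarrow> ominus (u f) (v f) \<le> 1"
  by (auto simp: cube_def ominus_def) (smt (verit))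

lemma D_ge0: "u \<in> cube F \<Longrightarrow> v \<in> cube F \<Longrightarrow> 0 \<le> D u v"
  unfolding dir_sup_metric_def by (rule usup_nonneg[where c=1]) (auto simp: om_ge0 om_le1)

lemma D_le1: "u \<in> cube F \<Longrightarrow> v \<in> cube F \<Longrightarrow> D u v \<le> 1"
  unfolding dir_sup_metric_def by (rule usup_le) (auto simp: om_le1)

lemma D_ge: "u \<in> cube F \<Longrightarrow> v \<in> cube F \<Longrightarrow> f \<in> F \<Longrightarrow> ominus (u f) (v f) \<le> D u v"
  unfolding dir_sup_metric_def by (rule usup_ge[where c=1]) (auto simp: om_le1)

lemma D_refl: "u \<in> cube F \<Longrightarrow> D u u = 0"
  using D_ge0[of u u] unfolding dir_sup_metric_def
  by (smt (verit) imageE ominus_def usup_le)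

lemma D_tri: "u \<in> cube F \<Longrightarrow> v \<in> cube F \<Longrightarrow> w \<in> cube F \<Longrightarrow> D u w \<le> D u v + D v w"
proof -
  assume c: "u \<in> cube F" "v \<in> cube F" "w \<in> cube F"
  show ?thesis unfolding dir_sup_metric_def[of F u w]
  proof (rule usup_le)
    fix a assume "a \<in> (\<lambda>f. ominus (u f) (w f)) ` F"
    then obtain f where f: "f \<in> F" "a = ominus (u f) (w f)" by auto
    have "a \<le> ominus (u f) (v f) + ominus (v f) (w f)" using f by (auto simp: ominus_def)
    also have "\<dots> \<le> D u v + D v w" using D_ge[OF c(1,2) f(1)] D_ge[OF c(2,3) f(1)] by simp
    finally show "a \<le> D u v + D v w" .
  next
    show "0 \<le> D u v + D v w" using D_ge0 c by (simp add: add_nonneg_nonneg)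
  qed
qed

end

theorem mainTheorem13:
  shows "(\<forall>F :: ('a \<Rightarrow> real) set. (\<forall>f\<in>F. unit_fun f) \<longrightarrow>
            gammaS (alphaS F) = {op \<circ> tuple F | op. nonexp_op F op})
       \<and> (\<forall>d :: 'a \<Rightarrow> 'a \<Rightarrow> real. dir_pmetric d \<longrightarrow> alphaS (gammaS d) = d)"
proof (intro conjI allI impI)
  fix F :: "('a \<Rightarrow> real) set"
  assume U: "\<forall>f\<in>F. unit_fun f"
  interpret cubeF F .
  have tc: "tuple F x \<in> cube F" for x using U by (auto simp: tuple_def cube_def unit_fun_def)
  have Dt: "D (tuple F x) (tuple F y) = alphaS F x y" for x y
    by (simp add: dir_sup_metric_def alphaS_def tuple_def)
  show "gammaS (alphaS F) = {op \<circ> tuple F | op. nonexp_op F op}"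
  proof (intro equalityI subsetI)
    fix g assume "g \<in> {op \<circ> tuple F | op. nonexp_op F op}"
    then obtain op where g: "g = op \<circ> tuple F" and ne: "nonexp_op F op" by auto
    show "g \<in> gammaS (alphaS F)"
      unfolding gammaS_def unit_fun_def mem_Collect_eq
    proof (intro conjI allI)
      fix x show "0 \<le> g x" "g x \<le> 1" using ne tc[of x] g by (auto simp: nonexp_op_def)
    next
      fix x1 x2 show "ominus (g x1) (g x2) \<le> alphaS F x1 x2"
        using ne tc[of x1] tc[of x2] g Dt[of x1 x2] unfolding nonexp_op_def by (metis comp_apply)
    qed
  next
    fix g assume "g \<in> gammaS (alphaS F)"
    then have gu: "\<And>x. 0 \<le> g x \<and> g x \<le> 1" and gd: "\<And>x1 x2. ominus (g x1) (g x2) \<le> alphaS F x1 x2"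
      by (auto simp: gammaS_def unit_fun_def)
    define S where "S u = (SUP x. g x - D (tuple F x) u)" for u
    define op where "op u = max 0 (S u)" for u
    have bdd: "bdd_above (range (\<lambda>x. g x - D (tuple F x) u))" if "u \<in> cube F" for u
      using gu D_ge0[OF tc that] by (intro bdd_aboveI[where M=1]) (smt (verit) imageE)
    have up: "g x - D (tuple F x) u \<le> S u" if "u \<in> cube F" for u x
      unfolding S_def by (rule cSUP_upper[OF _ bdd[OF that]]) simp
    have S1: "S u \<le> 1" if "u \<in> cube F" for u
      unfolding S_def using gu D_ge0[OF tc that] by (intro cSUP_least) (auto, smt (verit))
    have Sle: "S u \<le> S v + D u v" if "u \<in> cube F" "v \<in> cube F" for u v
      unfolding S_def[of u]
    proof (rule cSUP_least)
      fix x
      have "D (tuple F x) v \<le> D (tuple F x) u + D u v" by (rule D_tri[OF tc that])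
      then show "g x - D (tuple F x) u \<le> S v + D u v" using up[OF that(2), of x] by simp
    qed simp
    have ne: "nonexp_op F op"
      unfolding nonexp_op_def
    proof (intro conjI ballI)
      fix u assume "u \<in> cube F" then show "0 \<le> op u" "op u \<le> 1" using S1 by (auto simp: op_def)
    next
      fix u v assume c: "u \<in> cube F" "v \<in> cube F"
      show "ominus (op u) (op v) \<le> D u v"
        using Sle[OF c] D_ge0[OF c] by (auto simp: op_def ominus_def)
    qed
    have "op (tuple F y) = g y" for y
    proof -
      have "g y \<le> S (tuple F y)" using up[OF tc, of y y] D_refl[OF tc] by simp
      moreover have "S (tuple F y) \<le> g y" unfolding S_def
      proof (rule cSUP_least)
        fix x show "g x - D (tuple F x) (tuple F y) \<le> g y"
          using Dt[of x y] gd[of x y] om_ge[of "g x" "g y"] by simp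
      qed simp
      ultimately show ?thesis using gu[of y] by (simp add: op_def)
    qed
    then have "g = op \<circ> tuple F" by auto
    with ne show "g \<in> {op \<circ> tuple F | op. nonexp_op F op}" by blast
  qed
next
  fix d :: "'a \<Rightarrow> 'a \<Rightarrow> real"
  assume dp: "dir_pmetric d"
  have d01: "0 \<le> d x y" "d x y \<le> 1" "d x x = 0" for x y using dp by (auto simp: dir_pmetric_def)
  have dtri: "d x z \<le> d x y + d y z" for x y z
    using dp unfolding dir_pmetric_def oplus_def by (smt (verit))
  show "alphaS (gammaS d) = d"
  proof (intro ext antisym)
    fix x1 x2
    show "alphaS (gammaS d) x1 x2 \<le> d x1 x2"
      unfolding alphaS_def by (rule usup_le) (auto simp: gammaS_def d01)
    let ?f = "\<lambda>z. d z x2"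
    have fg: "?f \<in> gammaS d"
      unfolding gammaS_def unit_fun_def using d01 dtri
      by (auto simp: ominus_def) (smt (verit))
    have "d x1 x2 = ominus (?f x1) (?f x2)" using d01 by (simp add: ominus_def)
    also have "\<dots> \<le> alphaS (gammaS d) x1 x2"
      unfolding alphaS_def
      by (rule usup_ge[where c=1]) (use fg in \<open>auto simp: gammaS_def unit_fun_def ominus_def, smt (verit)\<close>)
    finally show "d x1 x2 \<le> alphaS (gammaS d) x1 x2" .
  qed
qed

end
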